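(* Let $N\in\mathbb{N}$ and let $u$ and $v$ be nontrivial, coprime divisors of $N$. Let $b\in\mathbb{Z}$ and $f\in\mathbb{Z}[X]$ with $f(b)=N$ such that (1) $\gcd(\mathrm{lc}(f),N)=1$, where $\mathrm{lc}(f)$ is the leading coefficient of $f$, and (2) $d:=\deg f$ is smaller than the largest prime factor of $v$. Then there exists $x\in\mathbb{Z}$ with $u\mid f(x)$ and $v\nmid f(x)$. *)

theory Defs
  imports "HOL-Computational_Algebra.Computational_Algebra"
begin

definition nontrivial_divisor :: "nat \<Rightarrow> nat \<Rightarrow> bool" where
  "nontrivial_divisor d N \<longleftrightarrow> d dvd N \<and> d \<noteq> 1 \<and> d \<noteq> N"

end

theory Submission imports Defs begin

lemma small_dvd_eq:
  fixes p t a :: int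
  assumes "p dvd t - a" "0 \<le> t" "t < p" "0 \<le> a" "a < p"
  shows "t = a"
proof (rule ccontr)
  assume "t \<noteq> a"
  then have "\<bar>t - a\<bar> \<ge> p" using assms(1) by (simp add: zdvd_imp_le dvd_abs_iff)
  then show False using assms by linarith
qed

lemma root_count:
  fixes p :: int
  assumes "prime p"
  shows "\<And>g :: int poly. degree g = n \<Longrightarrow> \<not> p dvd lead_coeff g \<Longrightarrow>
     card {t\<in>{0..<p}. p dvd poly g t} \<le> n"
proof (induction n)
  case 0
  then obtain c where g: "g = [:c:]" by (metis degree_eq_zeroE)
  then have "{t\<in>{0..<p}. p dvd poly g t} = {}" using 0 by auto
  then show ?case by (metis card.empty le_refl)
next
  case (Suc n)
  show ?case
  proof (cases "{t\<in>{0..<p}. p dvd poly g t} = {}")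
    case True then show ?thesis by (metis card.empty le0)
  next
    case False
    then obtain a where a: "a \<in> {0..<p}" "p dvd poly g a" by auto
    define q where "q = synthetic_div g a"
    have gq: "g = [:-a, 1:] * q + [:poly g a:]" unfolding q_def by (rule synthetic_div_correct'[symmetric])
    have qnz: "q \<noteq> 0" proof
      assume "q = 0" then have "g = [:poly g a:]" using gq by simp
      then have "degree g = 0" by (metis degree_pCons_0)
      then show False using Suc.prems(1) by simp
    qed
    have d1: "degree ([:-a, 1:] * q) = Suc (degree q)" using qnz degree_mult_eq[of "[:-a, 1:]" q] by (simp del: mult_pCons_left)
    have dg: "degree g = Suc (degree q)"
      using d1 by (subst gq, subst degree_add_eq_left) auto
    have lc: "lead_coeff g = lead_coeff q"
    proof -
      have "lead_coeff g = coeff ([:-a, 1:] * q) (Suc (degree q)) + coeff [:poly g a:] (Suc (degree q))"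
        using dg by (subst gq) (simp only: coeff_add)
      also have "\<dots> = lead_coeff ([:-a, 1:] * q)" using d1 by simp
      also have "\<dots> = lead_coeff q" by (simp only: lead_coeff_mult) simp
      finally show ?thesis .
    qed
    have IH: "card {t\<in>{0..<p}. p dvd poly q t} \<le> n"
      using Suc.IH[of q] Suc.prems dg lc by simp
    have sub: "{t\<in>{0..<p}. p dvd poly g t} \<subseteq> insert a {t\<in>{0..<p}. p dvd poly q t}"
    proof
      fix t assume t: "t \<in> {t\<in>{0..<p}. p dvd poly g t}"
      have "poly g t = (t - a) * poly q t + poly g a" by (subst gq) (simp add: algebra_simps)
      then have "p dvd (t - a) * poly q t" using t a by (metis add_diff_cancel_right' dvd_diff mem_Collect_eq)
      then have "p dvd t - a \<or> p dvd poly q t" using assms by (simp add: prime_dvd_mult_iff)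
      then show "t \<in> insert a {t\<in>{0..<p}. p dvd poly q t}"
        using t a small_dvd_eq[of p t a] by auto
    qed
    have "card {t\<in>{0..<p}. p dvd poly g t} \<le> card (insert a {t\<in>{0..<p}. p dvd poly q t})"
      by (rule card_mono[OF _ sub]) (rule finite_insert[THEN iffD2], rule finite_subset[of _ "{0..<p}"], auto)
    also have "\<dots> \<le> Suc (card {t\<in>{0..<p}. p dvd poly q t})" by (simp add: card_insert_le_m1)
    finally show ?thesis using IH by simp
  qed
qed

theorem lemma2p5:
  fixes N u v :: nat and b :: int and f :: "int poly"
  assumes "nontrivial_divisor u N" and "nontrivial_divisor v N"
    and "coprime u v"
    and "poly f b = int N"
    and "gcd (lead_coeff f) (int N) = 1"
    and "degree f < Max (prime_factors v)"
  shows "\<exists>x::int. int u dvd poly f x \<and> \<not> int v dvd poly f x"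
proof -
  have uN: "u dvd N" and u1: "u \<noteq> 1" and uN': "u \<noteq> N" using assms(1) by (auto simp: nontrivial_divisor_def)
  have vN: "v dvd N" and v1: "v \<noteq> 1" and vN': "v \<noteq> N" using assms(2) by (auto simp: nontrivial_divisor_def)
  have u0: "u \<noteq> 0" using uN uN' by auto
  have v0: "v \<noteq> 0" using vN vN' by auto
  define p where "p = Max (prime_factors v)"
  have ne: "prime_factors v \<noteq> {}" proof -
    obtain r where "prime r" "r dvd v" using prime_factor_nat[OF v1] by blast
    then have "r \<in> prime_factors v" using v0 by (simp add: in_prime_factors_iff)
    then show ?thesis by blast
  qed
  have pin: "p \<in> prime_factors v" unfolding p_def by (rule Max_in[OF finite_set_mset ne])
  have pp: "prime p" and pv: "p dvd v" using pin by auto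
  define P where "P = int p"
  have PP: "prime P" using pp by (simp add: P_def)
  define g where "g = pcompose f [:b, int u:]"
  have dg: "degree g = degree f" unfolding g_def using u0 by (simp add: degree_pcompose)
  have lg: "lead_coeff g = lead_coeff f * int u ^ degree f"
    unfolding g_def using u0 by (subst lead_coeff_comp) auto
  have nf: "\<not> P dvd lead_coeff f"
  proof
    assume "P dvd lead_coeff f"
    moreover have "P dvd int N" using pv vN unfolding P_def by (meson dvd_trans int_dvd_int_iff)
    ultimately have "P dvd 1" using assms(5) by (metis gcd_greatest)
    then show False using PP by (simp add: prime_int_iff)
  qed
  have nu: "\<not> P dvd int u"
  proof
    assume "P dvd int u"
    then have "p dvd u" by (simp add: P_def)
    then have "p dvd 1" using pv assms(3) by (metis coprime_common_divisor)
    then show False using pp by simp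
  qed
  have ng: "\<not> P dvd lead_coeff g" unfolding lg using nf nu PP
    by (metis prime_dvd_mult_iff prime_dvd_power)
  have "card {t\<in>{0..<P}. P dvd poly g t} \<le> degree f"
    using root_count[OF PP refl ng] dg by simp
  also have "\<dots> < card {0..<P}" using assms(6) unfolding P_def p_def[symmetric] by simp
  finally have lt: "card {t\<in>{0..<P}. P dvd poly g t} < card {0..<P}" .
  have "\<not> {0..<P} \<subseteq> {t\<in>{0..<P}. P dvd poly g t}"
  proof
    assume "{0..<P} \<subseteq> {t\<in>{0..<P}. P dvd poly g t}"
    then have "card {0..<P} \<le> card {t\<in>{0..<P}. P dvd poly g t}"
      by (intro card_mono) (rule finite_subset[of _ "{0..<P}"], auto)
    then show False using lt by simp
  qed
  then obtain t where t: "t \<in> {0..<P}" "\<not> P dvd poly g t" by blast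
  define x where "x = b + int u * t"
  have gx: "poly g t = poly f x" unfolding g_def x_def by (simp add: poly_pcompose mult.commute)
  define q where "q = synthetic_div f b"
  have fq: "f = [:-b, 1:] * q + [:poly f b:]" unfolding q_def by (rule synthetic_div_correct'[symmetric])
  have "poly f x = (x - b) * poly q x + int N" using assms(4) by (subst fq) (simp add: algebra_simps)
  also have "\<dots> = int u * (t * poly q x) + int N" by (simp add: x_def)
  finally have "int u dvd poly f x" using uN by (simp add: int_dvd_int_iff)
  moreover have "\<not> int v dvd poly f x"
  proof
    assume "int v dvd poly f x"
    moreover have "P dvd int v" using pv by (simp add: P_def)
    ultimately show False using t gx by (metis dvd_trans)
  qed
  ultimately show ?thesis by blast
qed

end
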